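(* Let $X,Y$ be compact metric spaces and let $\mathcal G\subset\mathrm{Homeo}(X)$, $\mathcal H\subset\mathrm{Homeo}(Y)$ be finitely generated pseudogroups strongly isomorphic via a homeomorphism $\varphi:X\to Y$; let $\mathcal G_1$ be a finite generating set of $\mathcal G$ and $\mathcal H_1=\{\varphi\circ g\circ\varphi^{-1}:g\in\mathcal G_1\}$. Then $h_{top}(\mathcal G,\mathcal G_1)=h_{top}(\mathcal H,\mathcal H_1)$.
   Context: $\mathrm{Homeo}(X)$: homeomorphisms $g:D_g\to R_g$ between open subsets of $X$, composed on natural domains $D_{h\circ g}=g^{-1}(D_h)$. A pseudogroup is a subset of $\mathrm{Homeo}(X)$ containing $\mathrm{id}_X$, closed under composition, inversion, restriction to open subsets, and gluing along open covers of the domain; $\Gamma$ generates $\mathcal G$ if $\bigcup_{g\in\Gamma}(D_g\cup R_g)=X$ and $\mathcal G$ is exactly the set of $g\in\mathrm{Homeo}(X)$ locally equal near each point of $D_g$ to a finite composition of elements of $\Gamma$ and their inverses. $\mathcal G,\mathcal H$ are strongly isomorphic via $\varphi$ if for every $f\in\mathrm{Homeo}(X)$: $\varphi\circ f\circ\varphi^{-1}\in\mathcal H$ iff $f\in\mathcal G$. For a pseudogroup with finite generating set $\Gamma$ on a compact metric space $Z$: $\Gamma_n=\{g_1\circ\cdots\circ g_n:g_i\in\Gamma\}$, $\Gamma_n^x=\{g\in\Gamma_n:x\in D_g\}$; $x,y$ are $(n,\varepsilon)$-separated if some $g\in\Gamma_n^x\cap\Gamma_n^y$ has $d(g(x),g(y))\ge\varepsilon$;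 $s(n,\varepsilon)$ is the maximal cardinality of a subset of $Z$ whose distinct points are pairwise $(n,\varepsilon)$-separated; and the topological entropy is $h_{top}=\lim_{\varepsilon\to0^+}\limsup_{n\to\infty}\frac1n\log s(n,\varepsilon)$. *)

theory Defs
  imports "HOL-Analysis.Analysis"
begin

(* Partial maps X -> X are represented as maps of type 'a \<Rightarrow> 'a option;
 the domain D_g is dom g, the range R_g is ran g. Composition on natural
 domains is map composition (\<circ>\<^sub>m). *)

definition pfun :: "('a \<Rightarrow> 'b option) \<Rightarrow> 'a \<Rightarrow> 'b" where
  "pfun g = (\<lambda>x. the (g x))"

definition phomeo :: "'a::topological_space set \<Rightarrow> ('a \<Rightarrow> 'a option) \<Rightarrow> bool" where
  "phomeo X g \<longleftrightarrow> openin (top_of_set X) (dom g) \<and> openin (top_of_set X) (ran g) \<and>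
     (\<exists>h. homeomorphism (dom g) (ran g) (pfun g) h)"

definition Homeo :: "'a::topological_space set \<Rightarrow> ('a \<Rightarrow> 'a option) set" where
  "Homeo X = {g. phomeo X g}"

definition pid :: "'a set \<Rightarrow> 'a \<Rightarrow> 'a option" where
  "pid X = (\<lambda>x. if x \<in> X then Some x else None)"

definition pinv :: "('a \<Rightarrow> 'a option) \<Rightarrow> 'a \<Rightarrow> 'a option" where
  "pinv g = (\<lambda>y. if y \<in> ran g then Some (THE x. g x = Some y) else None)"

definition pseudogroup :: "'a::topological_space set \<Rightarrow> ('a \<Rightarrow> 'a option) set \<Rightarrow> bool" where
  "pseudogroup X G \<longleftrightarrow>
     G \<subseteq> Homeo X \<and> pid X \<in> G \<and>
     (\<forall>f\<in>G. \<forall>g\<in>G. f \<circ>\<^sub>m g \<in> G) \<and>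
     (\<forall>g\<in>G. pinv g \<in> G) \<and>
     (\<forall>g\<in>G. \<forall>U. openin (top_of_set X) U \<longrightarrow> g |` U \<in> G) \<and>
     (\<forall>g\<in>Homeo X. \<forall>\<U>. (\<forall>U\<in>\<U>. openin (top_of_set X) U) \<and> dom g \<subseteq> \<Union>\<U> \<and>
        (\<forall>U\<in>\<U>. g |` U \<in> G) \<longrightarrow> g \<in> G)"

definition comp_word :: "'a set \<Rightarrow> ('a \<Rightarrow> 'a option) list \<Rightarrow> 'a \<Rightarrow> 'a option" where
  "comp_word X ws = foldr (\<lambda>g acc. g \<circ>\<^sub>m acc) ws (pid X)"

definition generates :: "'a::topological_space set \<Rightarrow> ('a \<Rightarrow> 'a option) set \<Rightarrow> ('a \<Rightarrow> 'a option) set \<Rightarrow> bool" where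
  "generates X \<Gamma> G \<longleftrightarrow>
     \<Gamma> \<subseteq> Homeo X \<and> (\<Union>g\<in>\<Gamma>. dom g \<union> ran g) = X \<and>
     G = {g \<in> Homeo X. \<forall>x\<in>dom g. \<exists>ws U. ws \<noteq> [] \<and> set ws \<subseteq> \<Gamma> \<union> pinv ` \<Gamma> \<and>
            openin (top_of_set X) U \<and> x \<in> U \<and> U \<subseteq> dom g \<and> U \<subseteq> dom (comp_word X ws) \<and>
            (\<forall>y\<in>U. g y = comp_word X ws y)}"

definition finitely_generated :: "'a::topological_space set \<Rightarrow> ('a \<Rightarrow> 'a option) set \<Rightarrow> bool" where
  "finitely_generated X G \<longleftrightarrow> (\<exists>\<Gamma>. finite \<Gamma> \<and> generates X \<Gamma> G)"

definition pconj :: "'a set \<Rightarrow> 'b set \<Rightarrow> ('a \<Rightarrow> 'b) \<Rightarrow> ('a \<Rightarrow> 'a option) \<Rightarrow> 'b \<Rightarrow> 'b option" where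
  "pconj X Y \<phi> f = (\<lambda>y. if y \<in> Y then map_option \<phi> (f (inv_into X \<phi> y)) else None)"

definition strongly_isomorphic ::
  "'a::topological_space set \<Rightarrow> 'b::topological_space set \<Rightarrow> ('a \<Rightarrow> 'b) \<Rightarrow>
   ('a \<Rightarrow> 'a option) set \<Rightarrow> ('b \<Rightarrow> 'b option) set \<Rightarrow> bool" where
  "strongly_isomorphic X Y \<phi> G H \<longleftrightarrow>
     (\<forall>f\<in>Homeo X. pconj X Y \<phi> f \<in> H \<longleftrightarrow> f \<in> G)"

definition Gamma_n :: "'a set \<Rightarrow> ('a \<Rightarrow> 'a option) set \<Rightarrow> nat \<Rightarrow> ('a \<Rightarrow> 'a option) set" where
  "Gamma_n X \<Gamma> n = {comp_word X ws | ws. length ws = n \<and> set ws \<subseteq> \<Gamma>}"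

definition separated :: "'a::metric_space set \<Rightarrow> ('a \<Rightarrow> 'a option) set \<Rightarrow> nat \<Rightarrow> real \<Rightarrow> 'a \<Rightarrow> 'a \<Rightarrow> bool" where
  "separated X \<Gamma> n \<epsilon> x y \<longleftrightarrow>
     (\<exists>g\<in>Gamma_n X \<Gamma> n. x \<in> dom g \<and> y \<in> dom g \<and> dist (pfun g x) (pfun g y) \<ge> \<epsilon>)"

definition sep_num :: "'a::metric_space set \<Rightarrow> ('a \<Rightarrow> 'a option) set \<Rightarrow> nat \<Rightarrow> real \<Rightarrow> nat" where
  "sep_num X \<Gamma> n \<epsilon> = Sup {card S | S. S \<subseteq> X \<and> finite S \<and>
       (\<forall>x\<in>S. \<forall>y\<in>S. x \<noteq> y \<longrightarrow> separated X \<Gamma> n \<epsilon> x y)}"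

definition htop :: "'a::metric_space set \<Rightarrow> ('a \<Rightarrow> 'a option) set \<Rightarrow> ereal" where
  "htop X \<Gamma> = Lim (at_right (0::real))
     (\<lambda>\<epsilon>. limsup (\<lambda>n. ereal (ln (real (sep_num X \<Gamma> n \<epsilon>)) / real n)))"

end

theory Submission
  imports Defs
begin

lemma ran_comp_word:
  assumes "set ws \<subseteq> \<Gamma>" "\<forall>g\<in>\<Gamma>. ran g \<subseteq> X"
  shows "ran (comp_word X ws) \<subseteq> X"
  using assms(1)
proof (induction ws)
  case Nil then show ?case by (auto simp: comp_word_def pid_def ran_def split: if_splits)
next
  case (Cons g ws)
  have "ran g \<subseteq> X" using Cons assms(2) by auto
  then show ?case
    by (auto simp: comp_word_def ran_def map_comp_def split: option.splits) 
qed

lemma finite_Gamma_n: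
  assumes "finite \<Gamma>" shows "finite (Gamma_n X \<Gamma> n)"
proof -
  have "Gamma_n X \<Gamma> n = comp_word X ` {ws. set ws \<subseteq> \<Gamma> \<and> length ws = n}"
    by (auto simp: Gamma_n_def)
  then show ?thesis using finite_lists_length_eq[OF assms] by simp
qed

lemma ran_Gamma_n:
  assumes "\<forall>g\<in>\<Gamma>. ran g \<subseteq> X" "g \<in> Gamma_n X \<Gamma> n"
  shows "ran g \<subseteq> X"
  using assms ran_comp_word unfolding Gamma_n_def by blast

lemma sep_bdd:
  fixes X :: "'a::metric_space set"
  assumes "compact X" "finite \<Gamma>" "\<forall>g\<in>\<Gamma>. ran g \<subseteq> X" "\<epsilon> > 0"
  shows "bdd_above {card S | S. S \<subseteq> X \<and> finite S \<and>
       (\<forall>x\<in>S. \<forall>y\<in>S. x \<noteq> y \<longrightarrow> separated X \<Gamma> n \<epsilon> x y)}"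
proof -
  obtain C where C: "C \<subseteq> X" "finite C" "X \<subseteq> (\<Union>c\<in>C. ball c (\<epsilon>/2))"
    using compactE_image[OF assms(1), of X "\<lambda>c. ball c (\<epsilon>/2)"] assms(4) by force
  define Gn where "Gn = Gamma_n X \<Gamma> n"
  have fGn: "finite Gn" using finite_Gamma_n[OF assms(2)] Gn_def by simp
  define B where "B = insert None (Some ` C)"
  have fB: "finite B" using C by (simp add: B_def)
  define code where "code = (\<lambda>x. \<lambda>g. if g \<in> Gn then (if x \<in> dom g then Some (SOME c. c \<in> C \<and> pfun g x \<in> ball c (\<epsilon>/2)) else None) else undefined)"
  have codeB: "code x \<in> PiE Gn (\<lambda>_. B)" if "x \<in> X" for x
  proof -
    have "Some (SOME c. c \<in> C \<and> pfun g x \<in> ball c (\<epsilon>/2)) \<in> B" if "g \<in> Gn" "x \<in> dom g" for g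
    proof -
      have "pfun g x \<in> ran g" using that(2) by (auto simp: pfun_def ran_def)
      then have "pfun g x \<in> X" using ran_Gamma_n[OF assms(3)] that(1) Gn_def by blast
      then have "\<exists>c. c \<in> C \<and> pfun g x \<in> ball c (\<epsilon>/2)" using C(3) by blast
      then show ?thesis unfolding B_def by (metis (mono_tags, lifting) image_eqI insertCI someI_ex)
    qed
    then show ?thesis by (auto simp: code_def B_def PiE_def extensional_def)
  qed
  have card_le: "card S \<le> card (PiE Gn (\<lambda>_. B))"
    if S: "S \<subseteq> X" "finite S" "\<forall>x\<in>S. \<forall>y\<in>S. x \<noteq> y \<longrightarrow> separated X \<Gamma> n \<epsilon> x y" for S
  proof -
    have "inj_on code S"
    proof (rule inj_onI, rule ccontr)
      fix x y assume xy: "x \<in> S" "y \<in> S" "code x = code y" "x \<noteq> y"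
      then obtain g where g: "g \<in> Gn" "x \<in> dom g" "y \<in> dom g" "dist (pfun g x) (pfun g y) \<ge> \<epsilon>"
        using S(3) unfolding separated_def Gn_def by blast
      have rg: "ran g \<subseteq> X" using g(1) ran_Gamma_n[OF assms(3)] Gn_def by blast
      have px: "pfun g x \<in> X" "pfun g y \<in> X"
        using g(2,3) rg by (auto simp: pfun_def ran_def)
      define c where "c = (SOME c. c \<in> C \<and> pfun g x \<in> ball c (\<epsilon>/2))"
      define c' where "c' = (SOME c. c \<in> C \<and> pfun g y \<in> ball c (\<epsilon>/2))"
      have "code x g = Some c" "code y g = Some c'" using g by (auto simp: code_def c_def c'_def)
      then have cc: "c = c'" using xy(3) by simp
      have "\<exists>c. c \<in> C \<and> pfun g x \<in> ball c (\<epsilon>/2)" using C(3) px by blast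
      then have 1: "pfun g x \<in> ball c (\<epsilon>/2)" unfolding c_def by (metis (mono_tags, lifting) someI_ex)
      have "\<exists>c. c \<in> C \<and> pfun g y \<in> ball c (\<epsilon>/2)" using C(3) px by blast
      then have 2: "pfun g y \<in> ball c (\<epsilon>/2)" unfolding cc c'_def by (metis (mono_tags, lifting) someI_ex)
      have "dist (pfun g x) (pfun g y) < \<epsilon>" using 1 2
        using dist_triangle[of "pfun g x" "pfun g y" c] by (simp add: dist_commute)
      then show False using g(4) by simp
    qed
    moreover have "code ` S \<subseteq> PiE Gn (\<lambda>_. B)" using codeB S(1) by blast
    ultimately show ?thesis
      by (metis card_image card_mono fB fGn finite_PiE)
  qed
  show ?thesis unfolding bdd_above_def using card_le by blast
qed

lemma hom_facts:
  assumes "homeomorphism X Y \<phi> \<psi>"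
  shows "\<And>x. x \<in> X \<Longrightarrow> \<psi> (\<phi> x) = x" "\<And>y. y \<in> Y \<Longrightarrow> \<phi> (\<psi> y) = y"
    "\<phi> ` X = Y" "\<psi> ` Y = X" "\<And>y. y \<in> Y \<Longrightarrow> inv_into X \<phi> y = \<psi> y"
proof -
  show 1: "\<And>x. x \<in> X \<Longrightarrow> \<psi> (\<phi> x) = x" "\<And>y. y \<in> Y \<Longrightarrow> \<phi> (\<psi> y) = y"
    "\<phi> ` X = Y" "\<psi> ` Y = X" using assms by (auto simp: homeomorphism_def)
  fix y assume y: "y \<in> Y"
  have "\<psi> y \<in> X" using y 1 by blast
  have "inj_on \<phi> X" using 1 by (metis inj_on_inverseI)
  then show "inv_into X \<phi> y = \<psi> y"
    by (metis \<open>\<psi> y \<in> X\<close> 1(2) inv_into_f_f y)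
qed

lemma pconj_apply:
  assumes "homeomorphism X Y \<phi> \<psi>" "x \<in> X"
  shows "pconj X Y \<phi> g (\<phi> x) = map_option \<phi> (g x)"
proof -
  have "\<phi> x \<in> Y" using hom_facts[OF assms(1)] assms(2) by blast
  then show ?thesis using hom_facts[OF assms(1)] assms(2) by (simp add: pconj_def)
qed

lemma pconj_comp:
  assumes "homeomorphism X Y \<phi> \<psi>" "ran g \<subseteq> X"
  shows "pconj X Y \<phi> (f \<circ>\<^sub>m g) = pconj X Y \<phi> f \<circ>\<^sub>m pconj X Y \<phi> g"
proof
  fix y
  show "pconj X Y \<phi> (f \<circ>\<^sub>m g) y = (pconj X Y \<phi> f \<circ>\<^sub>m pconj X Y \<phi> g) y"
  proof (cases "y \<in> Y")
    case False then show ?thesis by (simp add: pconj_def map_comp_def)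
  next
    case True
    show ?thesis
    proof (cases "g (inv_into X \<phi> y)")
      case None then show ?thesis using True by (simp add: pconj_def map_comp_def)
    next
      case (Some z)
      then have "z \<in> X" using assms(2) by (auto simp: ran_def)
      then show ?thesis using True Some pconj_apply[OF assms(1) \<open>z \<in> X\<close>, of f]
        by (simp add: pconj_def map_comp_def)
    qed
  qed
qed

lemma pconj_pid:
  assumes "homeomorphism X Y \<phi> \<psi>"
  shows "pconj X Y \<phi> (pid X) = pid Y"
proof
  fix y show "pconj X Y \<phi> (pid X) y = pid Y y"
    using hom_facts[OF assms] by (auto simp: pconj_def pid_def)
qed

lemma pconj_comp_word:
  assumes "homeomorphism X Y \<phi> \<psi>" "set ws \<subseteq> \<Gamma>" "\<forall>g\<in>\<Gamma>. ran g \<subseteq> X"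
  shows "comp_word Y (map (pconj X Y \<phi>) ws) = pconj X Y \<phi> (comp_word X ws)"
  using assms(2)
proof (induction ws)
  case Nil then show ?case using pconj_pid[OF assms(1)] by (simp add: comp_word_def)
next
  case (Cons g ws)
  have r: "ran (comp_word X ws) \<subseteq> X" using ran_comp_word[OF _ assms(3)] Cons.prems by auto
  have "comp_word Y (map (pconj X Y \<phi>) (g # ws)) = pconj X Y \<phi> g \<circ>\<^sub>m comp_word Y (map (pconj X Y \<phi>) ws)"
    by (simp add: comp_word_def)
  also have "\<dots> = pconj X Y \<phi> g \<circ>\<^sub>m pconj X Y \<phi> (comp_word X ws)" using Cons by simp
  also have "\<dots> = pconj X Y \<phi> (g \<circ>\<^sub>m comp_word X ws)" using pconj_comp[OF assms(1) r] by simp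
  finally show ?case by (simp add: comp_word_def)
qed

lemma Gamma_n_pconj:
  assumes "homeomorphism X Y \<phi> \<psi>" "\<forall>g\<in>\<Gamma>. ran g \<subseteq> X"
  shows "Gamma_n Y (pconj X Y \<phi> ` \<Gamma>) n = pconj X Y \<phi> ` Gamma_n X \<Gamma> n"
proof
  show "pconj X Y \<phi> ` Gamma_n X \<Gamma> n \<subseteq> Gamma_n Y (pconj X Y \<phi> ` \<Gamma>) n"
  proof
    fix h assume "h \<in> pconj X Y \<phi> ` Gamma_n X \<Gamma> n"
    then obtain ws where ws: "length ws = n" "set ws \<subseteq> \<Gamma>" "h = pconj X Y \<phi> (comp_word X ws)"
      by (auto simp: Gamma_n_def)
    then have "h = comp_word Y (map (pconj X Y \<phi>) ws)" using pconj_comp_word[OF assms(1) ws(2) assms(2)] by simp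
    moreover have "set (map (pconj X Y \<phi>) ws) \<subseteq> pconj X Y \<phi> ` \<Gamma>" using ws by auto
    ultimately show "h \<in> Gamma_n Y (pconj X Y \<phi> ` \<Gamma>) n" using ws(1) unfolding Gamma_n_def
      by (metis (mono_tags, lifting) length_map mem_Collect_eq)
  qed
next
  show "Gamma_n Y (pconj X Y \<phi> ` \<Gamma>) n \<subseteq> pconj X Y \<phi> ` Gamma_n X \<Gamma> n"
  proof
    fix h assume "h \<in> Gamma_n Y (pconj X Y \<phi> ` \<Gamma>) n"
    then obtain ws' where ws': "length ws' = n" "set ws' \<subseteq> pconj X Y \<phi> ` \<Gamma>" "h = comp_word Y ws'"
      by (auto simp: Gamma_n_def)
    define ws where "ws = map (\<lambda>k. SOME g. g \<in> \<Gamma> \<and> k = pconj X Y \<phi> g) ws'"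
    have sp: "(SOME g. g \<in> \<Gamma> \<and> k = pconj X Y \<phi> g) \<in> \<Gamma> \<and> k = pconj X Y \<phi> (SOME g. g \<in> \<Gamma> \<and> k = pconj X Y \<phi> g)"
      if "k \<in> set ws'" for k
    proof -
      have "\<exists>g. g \<in> \<Gamma> \<and> k = pconj X Y \<phi> g" using that ws'(2) by blast
      then show ?thesis by (rule someI_ex)
    qed
    have s: "set ws \<subseteq> \<Gamma>" using sp unfolding ws_def by auto
    have m: "map (pconj X Y \<phi>) ws = ws'" unfolding ws_def using sp
      by (induction ws') auto
    have "h = pconj X Y \<phi> (comp_word X ws)"
      using pconj_comp_word[OF assms(1) s assms(2)] m ws'(3) by simp
    moreover have "length ws = n" using ws'(1) ws_def by simp
    ultimately show "h \<in> pconj X Y \<phi> ` Gamma_n X \<Gamma> n" using s unfolding Gamma_n_def by blast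
  qed
qed

lemma sep_transfer:
  assumes "homeomorphism X Y \<phi> \<psi>" "\<forall>g\<in>\<Gamma>. ran g \<subseteq> X" "x \<in> X" "y \<in> X"
    "\<forall>a\<in>X. \<forall>b\<in>X. dist a b \<ge> \<epsilon> \<longrightarrow> dist (\<phi> a) (\<phi> b) \<ge> \<delta>"
    "separated X \<Gamma> n \<epsilon> x y"
  shows "separated Y (pconj X Y \<phi> ` \<Gamma>) n \<delta> (\<phi> x) (\<phi> y)"
proof -
  obtain g where g: "g \<in> Gamma_n X \<Gamma> n" "x \<in> dom g" "y \<in> dom g" "dist (pfun g x) (pfun g y) \<ge> \<epsilon>"
    using assms(6) unfolding separated_def by blast
  have rg: "ran g \<subseteq> X" using ran_Gamma_n[OF assms(2) g(1)] .
  obtain a b where ab: "g x = Some a" "g y = Some b" using g by auto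
  have abX: "a \<in> X" "b \<in> X" using rg ab by (auto simp: ran_def)
  have d: "dist (\<phi> a) (\<phi> b) \<ge> \<delta>" using assms(5) abX g(4) ab by (simp add: pfun_def)
  let ?h = "pconj X Y \<phi> g"
  have "?h \<in> Gamma_n Y (pconj X Y \<phi> ` \<Gamma>) n" using Gamma_n_pconj[OF assms(1,2)] g(1) by blast
  moreover have "?h (\<phi> x) = Some (\<phi> a)" "?h (\<phi> y) = Some (\<phi> b)"
    using pconj_apply[OF assms(1)] assms(3,4) ab by auto
  ultimately show ?thesis unfolding separated_def using d by (force simp: pfun_def)
qed

lemma ran_pconj:
  assumes "homeomorphism X Y \<phi> \<psi>" "ran g \<subseteq> X" shows "ran (pconj X Y \<phi> g) \<subseteq> Y"
proof
  fix z assume "z \<in> ran (pconj X Y \<phi> g)"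
  then obtain y where "pconj X Y \<phi> g y = Some z" by (auto simp: ran_def)
  then obtain w where "y \<in> Y" "g (inv_into X \<phi> y) = Some w" "z = \<phi> w" by (auto simp: pconj_def split: if_splits)
  then have "w \<in> X" using assms(2) by (auto simp: ran_def)
  then show "z \<in> Y" using hom_facts(3)[OF assms(1)] \<open>z = \<phi> w\<close> by blast
qed

lemma pconj_inv:
  assumes "homeomorphism X Y \<phi> \<psi>" "ran g \<subseteq> X" "dom g \<subseteq> X"
  shows "pconj Y X \<psi> (pconj X Y \<phi> g) = g"
proof
  fix x show "pconj Y X \<psi> (pconj X Y \<phi> g) x = g x"
  proof (cases "x \<in> X")
    case False then have "g x = None" using assms(3) by blast
    then show ?thesis using False by (auto simp: pconj_def)
  next
    case True
    have h2: "homeomorphism Y X \<psi> \<phi>" using assms(1) homeomorphism_sym by blast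
    have y: "\<psi> (\<phi> x) = x" "\<phi> x \<in> Y" using hom_facts[OF assms(1)] True by auto
    have "pconj Y X \<psi> (pconj X Y \<phi> g) x = pconj Y X \<psi> (pconj X Y \<phi> g) (\<psi> (\<phi> x))" using y by simp
    also have "\<dots> = map_option \<psi> (pconj X Y \<phi> g (\<phi> x))" using pconj_apply[OF h2 y(2)] .
    also have "\<dots> = map_option \<psi> (map_option \<phi> (g x))" using pconj_apply[OF assms(1) True] by simp
    also have "\<dots> = g x"
    proof (cases "g x")
      case (Some w) then have "w \<in> X" using assms(2) by (auto simp: ran_def)
      then show ?thesis using Some hom_facts[OF assms(1)] by simp
    qed simp
    finally show ?thesis .
  qed
qed

lemma sep_num_transfer:
  fixes X :: "'a::metric_space set" and Y :: "'b::metric_space set"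
  assumes "compact Y" "homeomorphism X Y \<phi> \<psi>" "finite \<Gamma>" "\<forall>g\<in>\<Gamma>. ran g \<subseteq> X" "\<epsilon> > 0"
  shows "\<exists>\<delta>>0. \<forall>n. sep_num X \<Gamma> n \<epsilon> \<le> sep_num Y (pconj X Y \<phi> ` \<Gamma>) n \<delta>"
proof -
  have "continuous_on Y \<psi>" using assms(2) by (simp add: homeomorphism_def)
  then have "uniformly_continuous_on Y \<psi>" using compact_uniformly_continuous assms(1) by blast
  then obtain \<delta> where d: "\<delta> > 0" "\<forall>y\<in>Y. \<forall>y'\<in>Y. dist y' y < \<delta> \<longrightarrow> dist (\<psi> y') (\<psi> y) < \<epsilon>"
    using assms(5) unfolding uniformly_continuous_on_def by blast
  have dd: "\<forall>a\<in>X. \<forall>b\<in>X. dist a b \<ge> \<epsilon> \<longrightarrow> dist (\<phi> a) (\<phi> b) \<ge> \<delta>"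
  proof (intro ballI impI)
    fix a b assume ab: "a \<in> X" "b \<in> X" "dist a b \<ge> \<epsilon>"
    show "dist (\<phi> a) (\<phi> b) \<ge> \<delta>"
    proof (rule ccontr)
      assume "\<not> ?thesis"
      moreover have "\<phi> a \<in> Y" "\<phi> b \<in> Y" using hom_facts(3)[OF assms(2)] ab by auto
      ultimately have "dist (\<psi> (\<phi> a)) (\<psi> (\<phi> b)) < \<epsilon>" using d(2) by auto
      then show False using hom_facts(1)[OF assms(2)] ab by simp
    qed
  qed
  have fin': "finite (pconj X Y \<phi> ` \<Gamma>)" using assms(3) by simp
  have ran': "\<forall>g\<in>pconj X Y \<phi> ` \<Gamma>. ran g \<subseteq> Y" using ran_pconj[OF assms(2)] assms(4) by blast
  have "sep_num X \<Gamma> n \<epsilon> \<le> sep_num Y (pconj X Y \<phi> ` \<Gamma>) n \<delta>" for n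
    unfolding sep_num_def
  proof (rule cSup_subset_mono)
    show "{card S |S. S \<subseteq> X \<and> finite S \<and> (\<forall>x\<in>S. \<forall>y\<in>S. x \<noteq> y \<longrightarrow> separated X \<Gamma> n \<epsilon> x y)} \<noteq> {}"
      by auto
    show "bdd_above {card S |S. S \<subseteq> Y \<and> finite S \<and> (\<forall>x\<in>S. \<forall>y\<in>S. x \<noteq> y \<longrightarrow> separated Y (pconj X Y \<phi> ` \<Gamma>) n \<delta> x y)}"
      by (rule sep_bdd[OF assms(1) fin' ran' d(1)])
    show "{card S |S. S \<subseteq> X \<and> finite S \<and> (\<forall>x\<in>S. \<forall>y\<in>S. x \<noteq> y \<longrightarrow> separated X \<Gamma> n \<epsilon> x y)}
      \<subseteq> {card S |S. S \<subseteq> Y \<and> finite S \<and> (\<forall>x\<in>S. \<forall>y\<in>S. x \<noteq> y \<longrightarrow> separated Y (pconj X Y \<phi> ` \<Gamma>) n \<delta> x y)}"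
    proof
      fix k assume "k \<in> {card S |S. S \<subseteq> X \<and> finite S \<and> (\<forall>x\<in>S. \<forall>y\<in>S. x \<noteq> y \<longrightarrow> separated X \<Gamma> n \<epsilon> x y)}"
      then obtain S where S: "k = card S" "S \<subseteq> X" "finite S" "\<forall>x\<in>S. \<forall>y\<in>S. x \<noteq> y \<longrightarrow> separated X \<Gamma> n \<epsilon> x y"
        by blast
      have inj: "inj_on \<phi> X" using hom_facts(1)[OF assms(2)] by (metis inj_on_inverseI)
      then have inj': "inj_on \<phi> S" using S(2) inj_on_subset by blast
      have "\<phi> ` S \<subseteq> Y" using S(2) hom_facts(3)[OF assms(2)] by blast
      moreover have "k = card (\<phi> ` S)" using S(1) card_image[OF inj'] by simp
      moreover have "\<forall>x\<in>\<phi> ` S. \<forall>y\<in>\<phi> ` S. x \<noteq> y \<longrightarrow> separated Y (pconj X Y \<phi> ` \<Gamma>) n \<delta> x y"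
      proof (intro ballI impI)
        fix x y assume "x \<in> \<phi> ` S" "y \<in> \<phi> ` S" "x \<noteq> y"
        then obtain a b where "a \<in> S" "b \<in> S" "x = \<phi> a" "y = \<phi> b" "a \<noteq> b" by blast
        then show "separated Y (pconj X Y \<phi> ` \<Gamma>) n \<delta> x y"
          using sep_transfer[OF assms(2) assms(4) _ _ dd] S by blast
      qed
      ultimately show "k \<in> {card S |S. S \<subseteq> Y \<and> finite S \<and> (\<forall>x\<in>S. \<forall>y\<in>S. x \<noteq> y \<longrightarrow> separated Y (pconj X Y \<phi> ` \<Gamma>) n \<delta> x y)}"
        using S(3) by blast
    qed
  qed
  then show ?thesis using d(1) by blast
qed

lemma sep_num_ge1:
  fixes X :: "'a::metric_space set"
  assumes "compact X" "finite \<Gamma>" "\<forall>g\<in>\<Gamma>. ran g \<subseteq> X" "\<epsilon> > 0" "X \<noteq> {}"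
  shows "1 \<le> sep_num X \<Gamma> n \<epsilon>"
proof -
  obtain x where "x \<in> X" using assms(5) by blast
  then have "1 \<in> {card S | S. S \<subseteq> X \<and> finite S \<and>
       (\<forall>x\<in>S. \<forall>y\<in>S. x \<noteq> y \<longrightarrow> separated X \<Gamma> n \<epsilon> x y)}"
    by (intro CollectI exI[of _ "{x}"]) auto
  then show ?thesis unfolding sep_num_def using le_cSup_finite sep_bdd[OF assms(1-4)]
    by (meson cSup_upper)
qed

lemma sep_num_mono_eps:
  fixes X :: "'a::metric_space set"
  assumes "compact X" "finite \<Gamma>" "\<forall>g\<in>\<Gamma>. ran g \<subseteq> X" "0 < \<epsilon>1" "\<epsilon>1 \<le> \<epsilon>2"
  shows "sep_num X \<Gamma> n \<epsilon>2 \<le> sep_num X \<Gamma> n \<epsilon>1"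
  unfolding sep_num_def
proof (rule cSup_subset_mono)
  show "{card S |S. S \<subseteq> X \<and> finite S \<and> (\<forall>x\<in>S. \<forall>y\<in>S. x \<noteq> y \<longrightarrow> separated X \<Gamma> n \<epsilon>2 x y)} \<noteq> {}"
    by auto
  show "bdd_above {card S |S. S \<subseteq> X \<and> finite S \<and> (\<forall>x\<in>S. \<forall>y\<in>S. x \<noteq> y \<longrightarrow> separated X \<Gamma> n \<epsilon>1 x y)}"
    by (rule sep_bdd[OF assms(1-4)])
  have "separated X \<Gamma> n \<epsilon>1 x y" if "separated X \<Gamma> n \<epsilon>2 x y" for x y
    using that assms(5) unfolding separated_def by force
  then show "{card S |S. S \<subseteq> X \<and> finite S \<and> (\<forall>x\<in>S. \<forall>y\<in>S. x \<noteq> y \<longrightarrow> separated X \<Gamma> n \<epsilon>2 x y)}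
    \<subseteq> {card S |S. S \<subseteq> X \<and> finite S \<and> (\<forall>x\<in>S. \<forall>y\<in>S. x \<noteq> y \<longrightarrow> separated X \<Gamma> n \<epsilon>1 x y)}"
    by blast
qed

lemma limsup_ln_mono:
  assumes "\<And>n. 1 \<le> a n" "\<And>n. a n \<le> (b n :: nat)"
  shows "limsup (\<lambda>n. ereal (ln (real (a n)) / real n)) \<le> limsup (\<lambda>n. ereal (ln (real (b n)) / real n))"
proof (rule Limsup_mono[OF always_eventually], rule allI)
  fix n
  have "ln (real (a n)) \<le> ln (real (b n))" using assms[of n] by simp
  then show "ereal (ln (real (a n)) / real n) \<le> ereal (ln (real (b n)) / real n)"
    by (simp add: divide_right_mono)
qed

lemma Lim_antitone:
  fixes f :: "real \<Rightarrow> ereal"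
  assumes "\<And>a b. 0 < a \<Longrightarrow> a \<le> b \<Longrightarrow> f b \<le> f a"
  shows "Lim (at_right 0) f = (SUP e\<in>{0<..}. f e)"
proof (rule tendsto_Lim)
  show "\<not> trivial_limit (at_right (0::real))" by simp
  show "(f \<longlongrightarrow> (SUP e\<in>{0<..}. f e)) (at_right 0)"
  proof (rule order_tendstoI)
    fix y assume "y < (SUP e\<in>{0<..}. f e)"
    then obtain e0 where e0: "e0 > 0" "y < f e0" by (auto simp: less_SUP_iff)
    show "\<forall>\<^sub>F x in at_right 0. y < f x"
      unfolding eventually_at_right_field
      using e0 assms by (intro exI[of _ e0]) (force intro: less_le_trans)
  next
    fix y assume "(SUP e\<in>{0<..}. f e) < y"
    then have "\<forall>x>0. f x < y" by (metis SUP_upper greaterThan_iff le_less_trans)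
    then show "\<forall>\<^sub>F x in at_right 0. f x < y"
      unfolding eventually_at_right_field by (intro exI[of _ 1]) auto
  qed
qed

lemma htop_SUP:
  fixes X :: "'a::metric_space set"
  assumes "compact X" "finite \<Gamma>" "\<forall>g\<in>\<Gamma>. ran g \<subseteq> X" "X \<noteq> {}"
  shows "htop X \<Gamma> = (SUP e\<in>{0<..}. limsup (\<lambda>n. ereal (ln (real (sep_num X \<Gamma> n e)) / real n)))"
  unfolding htop_def
proof (rule Lim_antitone)
  fix a b :: real assume "0 < a" "a \<le> b"
  show "limsup (\<lambda>n. ereal (ln (real (sep_num X \<Gamma> n b)) / real n))
        \<le> limsup (\<lambda>n. ereal (ln (real (sep_num X \<Gamma> n a)) / real n))"
    by (rule limsup_ln_mono) (use sep_num_ge1[OF assms(1-3)] sep_num_mono_eps[OF assms(1-3)] \<open>0 < a\<close> \<open>a \<le> b\<close> assms(4) in auto)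
qed

lemma htop_le:
  fixes X :: "'a::metric_space set" and Y :: "'b::metric_space set"
  assumes "compact X" "compact Y" "homeomorphism X Y \<phi> \<psi>" "finite \<Gamma>" "\<forall>g\<in>\<Gamma>. ran g \<subseteq> X" "X \<noteq> {}"
  shows "htop X \<Gamma> \<le> htop Y (pconj X Y \<phi> ` \<Gamma>)"
proof -
  have Y: "Y \<noteq> {}" using hom_facts(3)[OF assms(3)] assms(6) by blast
  have fin': "finite (pconj X Y \<phi> ` \<Gamma>)" using assms(4) by simp
  have ran': "\<forall>g\<in>pconj X Y \<phi> ` \<Gamma>. ran g \<subseteq> Y" using ran_pconj[OF assms(3)] assms(5) by blast
  show ?thesis
    unfolding htop_SUP[OF assms(1,4,5,6)] htop_SUP[OF assms(2) fin' ran' Y]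
  proof (rule SUP_least)
    fix e :: real assume "e \<in> {0<..}"
    then obtain \<delta> where d: "\<delta> > 0" "\<forall>n. sep_num X \<Gamma> n e \<le> sep_num Y (pconj X Y \<phi> ` \<Gamma>) n \<delta>"
      using sep_num_transfer[OF assms(2-5)] by auto
    have "limsup (\<lambda>n. ereal (ln (real (sep_num X \<Gamma> n e)) / real n))
        \<le> limsup (\<lambda>n. ereal (ln (real (sep_num Y (pconj X Y \<phi> ` \<Gamma>) n \<delta>)) / real n))"
      by (rule limsup_ln_mono) (use sep_num_ge1[OF assms(1,4,5)] assms(6) \<open>e \<in> {0<..}\<close> d in auto)
    also have "\<dots> \<le> (SUP e\<in>{0<..}. limsup (\<lambda>n. ereal (ln (real (sep_num Y (pconj X Y \<phi> ` \<Gamma>) n e)) / real n)))"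
      using d(1) by (intro SUP_upper) auto
    finally show "limsup (\<lambda>n. ereal (ln (real (sep_num X \<Gamma> n e)) / real n)) \<le> \<dots>" .
  qed
qed

theorem mainTheorem15:
  fixes X :: "'a::metric_space set" and Y :: "'b::metric_space set"
    and G :: "('a \<Rightarrow> 'a option) set" and H :: "('b \<Rightarrow> 'b option) set"
    and G1 :: "('a \<Rightarrow> 'a option) set" and \<phi> :: "'a \<Rightarrow> 'b"
  assumes "compact X" and "compact Y"
    and "pseudogroup X G" and "pseudogroup Y H"
    and "finitely_generated X G" and "finitely_generated Y H"
    and "\<exists>\<psi>. homeomorphism X Y \<phi> \<psi>"
    and "strongly_isomorphic X Y \<phi> G H"
    and "finite G1" and "generates X G1 G"
  shows "htop X G1 = htop Y (pconj X Y \<phi> ` G1)"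
proof -
  obtain \<psi> where h: "homeomorphism X Y \<phi> \<psi>" using assms(7) by blast
  have h2: "homeomorphism Y X \<psi> \<phi>" using h homeomorphism_sym by blast
  have dr: "dom g \<subseteq> X \<and> ran g \<subseteq> X" if "g \<in> G1" for g
  proof -
    have "phomeo X g" using assms(10) that by (auto simp: generates_def Homeo_def)
    then show ?thesis unfolding phomeo_def by (metis openin_subset topspace_euclidean_subtopology)
  qed
  show ?thesis
  proof (cases "X = {}")
    case True
    then have Ye: "Y = {}" using hom_facts(3)[OF h] by blast
    have "sep_num X G1 n e = 0" for n e using True by (simp add: sep_num_def)
    moreover have "sep_num Y (pconj X Y \<phi> ` G1) n e = 0" for n e using Ye by (simp add: sep_num_def)
    ultimately show ?thesis by (simp add: htop_def)
  next
    case False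
    let ?G' = "pconj X Y \<phi> ` G1"
    have ranG: "\<forall>g\<in>G1. ran g \<subseteq> X" using dr by blast
    have 1: "htop X G1 \<le> htop Y ?G'" by (rule htop_le[OF assms(1,2) h assms(9) ranG False])
    have fin': "finite ?G'" using assms(9) by simp
    have ran': "\<forall>g\<in>?G'. ran g \<subseteq> Y" using ran_pconj[OF h] ranG by blast
    have Y: "Y \<noteq> {}" using hom_facts(3)[OF h] False by blast
    have bk: "pconj Y X \<psi> ` ?G' = G1"
      using pconj_inv[OF h] dr by (auto simp: image_image)
    have "htop Y ?G' \<le> htop X (pconj Y X \<psi> ` ?G')" by (rule htop_le[OF assms(2,1) h2 fin' ran' Y])
    then have 2: "htop Y ?G' \<le> htop X G1" using bk by simp
    show ?thesis using 1 2 by simp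
  qed
qed

end
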